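(* Consider the constrained multivariate linear model described in the context, with $\mathcal{B}=\mathrm{span}(\boldsymbol\beta)$, $\mathcal{U}=\mathrm{span}(\mathbf U)$ and $\mathcal{E}_{\boldsymbol\Sigma}(\mathcal{B})$ the $\boldsymbol\Sigma$-envelope of $\mathcal{B}$. If $\mathcal{B}\subseteq\mathcal{U}\subseteq\mathcal{E}_{\boldsymbol\Sigma}(\mathcal{B})$, then $$\mathrm{avar}(\sqrt{n}\,\mathrm{vec}(\widehat{\boldsymbol\beta}_{\mathrm{cm}}))\le \mathrm{avar}(\sqrt{n}\,\mathrm{vec}(\widehat{\boldsymbol\beta}_{\mathrm{em}}))$$ in the Loewner (positive semi-definite) order, where these asymptotic covariance matrices are $$\mathrm{avar}(\sqrt{n}\,\mathrm{vec}(\widehat{\boldsymbol\beta}_{\mathrm{cm}}))=\boldsymbol\Sigma_{\mathbf X}^{-1}\otimes \mathbf U(\mathbf U^T\boldsymbol\Sigma^{-1}\mathbf U)^{-1}\mathbf U^T,$$ $$\mathrm{avar}(\sqrt{n}\,\mathrm{vec}(\widehat{\boldsymbol\beta}_{\mathrm{em}}))=\boldsymbol\Sigma_{\mathbf X}^{-1}\otimes\boldsymbol\Gamma\boldsymbol\Omega\boldsymbol\Gamma^T+(\boldsymbol\eta^T\otimes\boldsymbol\Gamma_0)\,\mathbf M^{\dagger}(\boldsymbol\Sigma_{\mathbf X})\,(\boldsymbol\eta\otimes\boldsymbol\Gamma_0^T).$$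
   Context: Data: for $i=1,\dots,n$, $\mathbf Y_i=\mathbf U\boldsymbol\alpha_0+\mathbf U\boldsymbol\alpha\mathbf X_i+\boldsymbol\varepsilon_i$, where $\mathbf Y_i\in\mathbb R^r$, the predictors $\mathbf X_i\in\mathbb R^p$ are non-stochastic, $\mathbf U\in\mathbb R^{r\times k}$ is a known matrix of full column rank, $\boldsymbol\alpha_0\in\mathbb R^k$, $\boldsymbol\alpha\in\mathbb R^{k\times p}$, and the $\boldsymbol\varepsilon_i$ are i.i.d. $N(0,\boldsymbol\Sigma)$ with $\boldsymbol\Sigma>0$. Set $\boldsymbol\beta=\mathbf U\boldsymbol\alpha\in\mathbb R^{r\times p}$, $\mathcal B=\mathrm{span}(\boldsymbol\beta)$, $\mathcal U=\mathrm{span}(\mathbf U)$, and let $\boldsymbol\Sigma_{\mathbf X}$ (positive definite) be the limit of the sample covariance matrix of the $\mathbf X_i$. A subspace $\mathcal R\subseteq\mathbb R^r$ reduces the symmetric matrix $\boldsymbol\Sigma$ if $\boldsymbol\Sigma\mathcal R\subseteq\mathcal R$ (equivalently $\boldsymbol\Sigma=\mathbf P_{\mathcal R}\boldsymbol\Sigma\mathbf P_{\mathcal R}+\mathbf Q_{\mathcal R}\boldsymbol\Sigma\mathbf Q_{\mathcal R}$, with $\mathbf P_{\mathcal R}$ the orthogonal projection onto $\mathcal R$ and $\mathbf Q_{\mathcal R}=\mathbf I-\mathbf P_{\mathcal R}$). The $\boldsymbol\Sigma$-envelope $\mathcal E_{\boldsymbol\Sigma}(\mathcal B)$ is the intersection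 of all reducing subspaces of $\boldsymbol\Sigma$ containing $\mathcal B$; let $u$ be its dimension, $\boldsymbol\Gamma\in\mathbb R^{r\times u}$ a semi-orthogonal basis of it, $(\boldsymbol\Gamma,\boldsymbol\Gamma_0)$ an orthogonal matrix, $\boldsymbol\eta=\boldsymbol\Gamma^T\boldsymbol\beta$ (so $\boldsymbol\beta=\boldsymbol\Gamma\boldsymbol\eta$), $\boldsymbol\Omega=\boldsymbol\Gamma^T\boldsymbol\Sigma\boldsymbol\Gamma$, $\boldsymbol\Omega_0=\boldsymbol\Gamma_0^T\boldsymbol\Sigma\boldsymbol\Gamma_0$. For $\mathbf C\in\mathbb R^{p\times p}$, $\mathbf M(\mathbf C)=\boldsymbol\eta\mathbf C\boldsymbol\eta^T\otimes\boldsymbol\Omega_0^{-1}+\boldsymbol\Omega\otimes\boldsymbol\Omega_0^{-1}+\boldsymbol\Omega^{-1}\otimes\boldsymbol\Omega_0-2\mathbf I$, and $\dagger$ denotes the Moore–Penrose inverse. $\widehat{\boldsymbol\beta}_{\mathrm{cm}}$ is the maximum likelihood estimator of $\boldsymbol\beta$ under the constrained model above (with $\mathbf U$ known), and $\widehat{\boldsymbol\beta}_{\mathrm{em}}$ is the maximum likelihood estimator of $\boldsymbol\beta$ under the unconstrained envelope model $\mathbf Y_i=\boldsymbol\beta_0+\boldsymbol\Gamma\boldsymbol\eta\mathbf X_i+\boldsymbol\varepsilon_i$, $\boldsymbol\Sigma=\boldsymbol\Gamma\boldsymbol\Omega\boldsymbol\Gamma^T+\boldsymbol\Gamma_0\boldsymbol\Omega_0\boldsymbol\Gamma_0^T$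 (with $\boldsymbol\Gamma$ unknown, $u$ known, and no use of $\mathbf U$); $\sqrt n\,\mathrm{vec}(\widehat{\boldsymbol\beta}-\boldsymbol\beta)$ is asymptotically normal with mean 0 and the displayed covariance matrices, denoted $\mathrm{avar}(\cdot)$. *)

theory Defs
  imports "Jordan_Normal_Form.Matrix"
begin

definition col_space :: "real mat \<Rightarrow> real vec set" where
  "col_space A = {A *\<^sub>v x | x. x \<in> carrier_vec (dim_col A)}"

definition is_subspace :: "nat \<Rightarrow> real vec set \<Rightarrow> bool" where
  "is_subspace r S \<longleftrightarrow> S \<subseteq> carrier_vec r \<and> 0\<^sub>v r \<in> S \<and>
     (\<forall>x\<in>S. \<forall>y\<in>S. x + y \<in> S) \<and> (\<forall>c. \<forall>x\<in>S. c \<cdot>\<^sub>v x \<in> S)"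

definition reduces :: "real mat \<Rightarrow> real vec set \<Rightarrow> bool" where
  "reduces S R \<longleftrightarrow> (\<forall>x\<in>R. S *\<^sub>v x \<in> R)"

definition envelope :: "real mat \<Rightarrow> real vec set \<Rightarrow> real vec set" where
  "envelope S B =
     \<Inter>{R. is_subspace (dim_row S) R \<and> reduces S R \<and> B \<subseteq> R}"

definition symmetric_mat :: "real mat \<Rightarrow> bool" where
  "symmetric_mat A \<longleftrightarrow> A\<^sup>T = A"

definition pos_def :: "nat \<Rightarrow> real mat \<Rightarrow> bool" where
  "pos_def n A \<longleftrightarrow> A \<in> carrier_mat n n \<and> symmetric_mat A \<and>
     (\<forall>x\<in>carrier_vec n. x \<noteq> 0\<^sub>v n \<longrightarrow> x \<bullet> (A *\<^sub>v x) > 0)"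

definition psd :: "nat \<Rightarrow> real mat \<Rightarrow> bool" where
  "psd n A \<longleftrightarrow> A \<in> carrier_mat n n \<and> symmetric_mat A \<and>
     (\<forall>x\<in>carrier_vec n. x \<bullet> (A *\<^sub>v x) \<ge> 0)"

definition loewner_le :: "nat \<Rightarrow> real mat \<Rightarrow> real mat \<Rightarrow> bool" where
  "loewner_le n A B \<longleftrightarrow> A \<in> carrier_mat n n \<and> B \<in> carrier_mat n n \<and> psd n (B - A)"

definition mat_inv :: "real mat \<Rightarrow> real mat" where
  "mat_inv A = (THE B. B \<in> carrier_mat (dim_row A) (dim_row A) \<and>
                       A * B = 1\<^sub>m (dim_row A) \<and> B * A = 1\<^sub>m (dim_row A))"

definition moore_penrose :: "real mat \<Rightarrow> real mat" where
  "moore_penrose A = (THE X. X \<in> carrier_mat (dim_col A) (dim_row A) \<and>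
      A * X * A = A \<and> X * A * X = X \<and> (A * X)\<^sup>T = A * X \<and> (X * A)\<^sup>T = X * A)"

(* Kronecker product A \<otimes> B: block matrix with (i,j) block A$$(i,j) \<cdot> B
   (compatible with column-stacking vec). *)
definition kron :: "real mat \<Rightarrow> real mat \<Rightarrow> real mat" where
  "kron A B = mat (dim_row A * dim_row B) (dim_col A * dim_col B)
     (\<lambda>(i, j). A $$ (i div dim_row B, j div dim_col B) * B $$ (i mod dim_row B, j mod dim_col B))"

definition full_col_rank :: "real mat \<Rightarrow> bool" where
  "full_col_rank A \<longleftrightarrow> (\<forall>x\<in>carrier_vec (dim_col A). A *\<^sub>v x = 0\<^sub>v (dim_row A) \<longrightarrow> x = 0\<^sub>v (dim_col A))"

definition M_mat :: "real mat \<Rightarrow> real mat \<Rightarrow> real mat \<Rightarrow> real mat \<Rightarrow> real mat" where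
  "M_mat eta Omega Omega0 C =
     kron (eta * C * eta\<^sup>T) (mat_inv Omega0) + kron Omega (mat_inv Omega0)
     + kron (mat_inv Omega) Omega0
     - 2 \<cdot>\<^sub>m 1\<^sub>m (dim_row Omega * dim_row Omega0)"

definition avar_cm :: "real mat \<Rightarrow> real mat \<Rightarrow> real mat \<Rightarrow> real mat" where
  "avar_cm SX S U =
     kron (mat_inv SX) (U * mat_inv (U\<^sup>T * mat_inv S * U) * U\<^sup>T)"

definition avar_em :: "real mat \<Rightarrow> real mat \<Rightarrow> real mat \<Rightarrow> real mat \<Rightarrow> real mat \<Rightarrow> real mat" where
  "avar_em SX S Gamma Gamma0 beta =
    (let eta = Gamma\<^sup>T * beta; Omega = Gamma\<^sup>T * S * Gamma;
         Omega0 = Gamma0\<^sup>T * S * Gamma0 in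
     kron (mat_inv SX) (Gamma * Omega * Gamma\<^sup>T)
     + kron (eta\<^sup>T) Gamma0 * moore_penrose (M_mat eta Omega Omega0 SX) * kron eta (Gamma0\<^sup>T))"

end

theory Submission
  imports Defs "Jordan_Normal_Form.Determinant"
begin

lemma aux_neg: fixes a b :: real assumes "a \<ge> 0" "b \<noteq> 0"
  shows "(- b / (a + 1)) * (2 * b + (- b / (a + 1)) * a) < 0"
proof -
  have p: "a + 1 > 0" using assms by simp
  have "(- b / (a + 1)) * (2 * b + (- b / (a + 1)) * a) = - (b^2 * (a + 2) / (a+1)^2)"
    using p by (simp add: field_simps power2_eq_square)
  also have "\<dots> < 0" using assms p by (simp add: divide_neg_pos)
  finally show ?thesis .
qed

lemma quad_expand:
  assumes A: "(A::real mat) \<in> carrier_mat n n" and x: "x \<in> carrier_vec n" and y: "y \<in> carrier_vec n"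
  shows "(x + y) \<bullet> (A *\<^sub>v (x + y)) = x \<bullet> (A *\<^sub>v x) + x \<bullet> (A *\<^sub>v y) + y \<bullet> (A *\<^sub>v x) + y \<bullet> (A *\<^sub>v y)"
proof -
  have "A *\<^sub>v (x + y) = A *\<^sub>v x + A *\<^sub>v y" using mult_add_distrib_mat_vec[OF A x y] .
  moreover have "(x + y) \<bullet> (A *\<^sub>v x + A *\<^sub>v y) = x \<bullet> (A *\<^sub>v x + A *\<^sub>v y) + y \<bullet> (A *\<^sub>v x + A *\<^sub>v y)"
    by (rule add_scalar_prod_distrib[of _ n], insert A x y, auto)
  moreover have "x \<bullet> (A *\<^sub>v x + A *\<^sub>v y) = x \<bullet> (A *\<^sub>v x) + x \<bullet> (A *\<^sub>v y)"
    by (rule scalar_prod_add_distrib[of _ n], insert A x y, auto)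
  moreover have "y \<bullet> (A *\<^sub>v x + A *\<^sub>v y) = y \<bullet> (A *\<^sub>v x) + y \<bullet> (A *\<^sub>v y)"
    by (rule scalar_prod_add_distrib[of _ n], insert A x y, auto)
  ultimately show ?thesis by simp
qed

lemma unit_quad:
  assumes A: "(A::real mat) \<in> carrier_mat n n" and i: "i < n" and j: "j < n"
  shows "unit_vec n i \<bullet> (A *\<^sub>v unit_vec n j) = A $$ (i,j)"
  using A i j by simp

lemma smult_quad:
  assumes A: "(A::real mat) \<in> carrier_mat n n" and x: "x \<in> carrier_vec n" and y: "y \<in> carrier_vec n"
  shows "x \<bullet> (A *\<^sub>v (s \<cdot>\<^sub>v y)) = s * (x \<bullet> (A *\<^sub>v y))"
    and "(s \<cdot>\<^sub>v y) \<bullet> (A *\<^sub>v x) = s * (y \<bullet> (A *\<^sub>v x))"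
  using A x y by (auto simp: mult_mat_vec)

lemma psd_diag: assumes "psd n A" "i < n" shows "A $$ (i,i) \<ge> 0"
proof -
  have "unit_vec n i \<bullet> (A *\<^sub>v unit_vec n i) \<ge> 0" using assms unfolding psd_def by auto
  thus ?thesis using assms unit_quad[of A n i i] unfolding psd_def by auto
qed

lemma psd_zero_diag:
  assumes P: "psd n A" and i: "i < n" and j: "j < n" and z: "A $$ (j,j) = 0"
  shows "A $$ (i,j) = 0"
proof (cases "i = j")
  case True then show ?thesis using z by simp
next
  case False
  have A: "A \<in> carrier_mat n n" and sym: "A\<^sup>T = A" using P unfolding psd_def symmetric_mat_def by auto
  have symij: "A $$ (j,i) = A $$ (i,j)" using sym i j A
    by (metis carrier_matD index_transpose_mat(1))
  have ai: "A $$ (i,i) \<ge> 0" using psd_diag[OF P i] .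
  define s where "s = - A $$ (i,j) / (A $$ (i,i) + 1)"
  let ?x = "unit_vec n j + s \<cdot>\<^sub>v unit_vec n i"
  have "?x \<in> carrier_vec n" by simp
  hence ge: "?x \<bullet> (A *\<^sub>v ?x) \<ge> 0" using P unfolding psd_def by auto
  have "?x \<bullet> (A *\<^sub>v ?x) = A$$(j,j) + s * A$$(j,i) + s * A$$(i,j) + s * (s * A$$(i,i))"
    by (subst quad_expand[OF A], auto simp: smult_quad[OF A] unit_quad[OF A] i j)
  also have "\<dots> = s * (2 * A$$(i,j) + s * A $$ (i,i))" using z symij by (simp add: algebra_simps)
  finally have ge2: "0 \<le> s * (2 * A$$(i,j) + s * A $$ (i,i))" using ge by simp
  show ?thesis
  proof (rule ccontr)
    assume ne: "A $$ (i,j) \<noteq> 0"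
    have "s * (2 * A$$(i,j) + s * A $$ (i,i)) < 0" unfolding s_def using aux_neg[OF ai ne] by (simp add: mult.commute)
    thus False using ge2 by simp
  qed
qed


lemma mult_unit_col:
  assumes A: "(A::real mat) \<in> carrier_mat n n" and i: "i < n"
  shows "A *\<^sub>v unit_vec n i = col A i"
  by (rule eq_vecI, insert A i, auto)

lemma schur_step_psd:
  assumes P: "psd n A" and i: "i < n" and a: "A $$ (i,i) > 0"
  defines "A' \<equiv> mat n n (\<lambda>(j,l). A$$(j,l) - A$$(j,i) * A$$(l,i) / A$$(i,i))"
  shows "psd n A'"
proof -
  have A: "A \<in> carrier_mat n n" and sym: "A\<^sup>T = A" using P unfolding psd_def symmetric_mat_def by auto
  have symA: "\<And>j l. j < n \<Longrightarrow> l < n \<Longrightarrow> A $$ (j,l) = A $$ (l,j)" using sym A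
    by (metis carrier_matD index_transpose_mat(1))
  let ?a = "A $$ (i,i)"
  let ?c = "col A i"
  have c: "?c \<in> carrier_vec n" using A by auto
  have carr: "A' \<in> carrier_mat n n" unfolding A'_def by auto
  have symm: "symmetric_mat A'" unfolding symmetric_mat_def A'_def
    by (rule eq_matI, auto simp: symA)
  have quad: "x \<bullet> (A' *\<^sub>v x) \<ge> 0" if x: "x \<in> carrier_vec n" for x
  proof -
    define t where "t = x \<bullet> ?c"
    have tsum: "t = (\<Sum>l = 0..<n. x $ l * A$$(l,i))" unfolding t_def scalar_prod_def
      using c A i by (intro sum.cong, auto)
    have Av: "A' *\<^sub>v x = A *\<^sub>v x - (t / ?a) \<cdot>\<^sub>v ?c"
    proof (rule eq_vecI)
      fix j assume "j < dim_vec (A *\<^sub>v x - (t / ?a) \<cdot>\<^sub>v ?c)"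
      hence j: "j < n" using A by auto
      have "(A' *\<^sub>v x) $ j = (\<Sum>l = 0..<n. (A$$(j,l) - A$$(j,i) * A$$(l,i) / ?a) * x $ l)"
        using j x unfolding A'_def by (simp add: scalar_prod_def)
      also have "\<dots> = (\<Sum>l = 0..<n. A$$(j,l) * x $ l) - A$$(j,i) / ?a * (\<Sum>l = 0..<n. x $ l * A$$(l,i))"
        by (simp add: sum_subtractf sum_distrib_left left_diff_distrib algebra_simps)
      also have "\<dots> = (A *\<^sub>v x - (t / ?a) \<cdot>\<^sub>v ?c) $ j"
        using j x A i unfolding tsum by (simp add: scalar_prod_def)
      finally show "(A' *\<^sub>v x) $ j = (A *\<^sub>v x - (t / ?a) \<cdot>\<^sub>v ?c) $ j" .
    qed (insert A carr, auto)
    have q1: "x \<bullet> (A' *\<^sub>v x) = x \<bullet> (A *\<^sub>v x) - t * t / ?a"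
      unfolding Av using x c A
      by (subst scalar_prod_minus_distrib[of _ n], auto simp: t_def)
    define s where "s = - t / ?a"
    let ?y = "x + s \<cdot>\<^sub>v unit_vec n i"
    have "?y \<in> carrier_vec n" using x by simp
    hence ge: "?y \<bullet> (A *\<^sub>v ?y) \<ge> 0" using P unfolding psd_def by auto
    have e1: "x \<bullet> (A *\<^sub>v unit_vec n i) = t" unfolding t_def mult_unit_col[OF A i] ..
    have "row A i = ?c" using symA A i by (intro eq_vecI, auto)
    hence e2: "unit_vec n i \<bullet> (A *\<^sub>v x) = t" unfolding t_def using A x i c
      by (simp add: comm_scalar_prod[of _ n])
    have "?y \<bullet> (A *\<^sub>v ?y) = x \<bullet> (A *\<^sub>v x) + s * t + s * t + s * (s * ?a)"
      by (subst quad_expand[OF A x], auto simp: smult_quad[OF A] unit_quad[OF A] i x e1 e2)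
    also have "\<dots> = x \<bullet> (A *\<^sub>v x) - t * t / ?a" unfolding s_def using a
      by (simp add: field_simps)
    finally show ?thesis using ge q1 by simp
  qed
  show ?thesis unfolding psd_def using carr symm quad by auto
qed

lemma gram_aux:
  "card {j\<in>{0..<n}. A$$(j,j) \<noteq> 0} = N \<Longrightarrow> psd n A \<Longrightarrow>
   \<exists>m W. W \<in> carrier_mat n m \<and> A = W * W\<^sup>T \<and> (\<forall>z\<in>carrier_vec m. W *\<^sub>v z = 0\<^sub>v n \<longrightarrow> z = 0\<^sub>v m)"
proof (induct N arbitrary: A rule: less_induct)
  case (less N A)
  have P: "psd n A" by fact
  have A: "A \<in> carrier_mat n n" and sym: "A\<^sup>T = A" using P unfolding psd_def symmetric_mat_def by auto
  show ?case
  proof (cases "\<forall>j<n. A $$ (j,j) = 0")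
    case True
    have A0: "A = 0\<^sub>m n n"
    proof (rule eq_matI)
      fix j l assume "j < dim_row (0\<^sub>m n n :: real mat)" "l < dim_col (0\<^sub>m n n :: real mat)"
      hence j: "j < n" and l: "l < n" by auto
      have "A $$ (j,l) = 0" by (rule psd_zero_diag[OF P j l], insert True l, blast)
      thus "A $$ (j,l) = 0\<^sub>m n n $$ (j,l)" using j l by simp
    qed (insert A, auto)
    let ?W = "0\<^sub>m n 0 :: real mat"
    have W0: "?W \<in> carrier_mat n 0" by simp
    have "A = ?W * ?W\<^sup>T" unfolding A0 by (rule eq_matI, auto simp: scalar_prod_def)
    moreover have "\<forall>z\<in>carrier_vec 0. ?W *\<^sub>v z = 0\<^sub>v n \<longrightarrow> z = (0\<^sub>v 0 :: real vec)"
      by (intro ballI impI eq_vecI, auto)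
    ultimately show ?thesis by (intro exI[of _ 0] exI[of _ ?W] conjI W0)
  next
    case False
    then obtain i where i: "i < n" and ne: "A $$ (i,i) \<noteq> 0" by auto
    let ?a = "A $$ (i,i)"
    have a: "?a > 0" using psd_diag[OF P i] ne by simp
    have symA: "\<And>j l. j < n \<Longrightarrow> l < n \<Longrightarrow> A $$ (j,l) = A $$ (l,j)" using sym A
      by (metis carrier_matD index_transpose_mat(1))
    define A' where "A' \<equiv> mat n n (\<lambda>(j,l). A$$(j,l) - A$$(j,i) * A$$(l,i) / A$$(i,i))"
    have P': "psd n A'" unfolding A'_def by (rule schur_step_psd[OF P i a])
    have sub: "{j\<in>{0..<n}. A'$$(j,j) \<noteq> 0} \<subset> {j\<in>{0..<n}. A$$(j,j) \<noteq> 0}"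
    proof
      show "{j\<in>{0..<n}. A'$$(j,j) \<noteq> 0} \<subseteq> {j\<in>{0..<n}. A$$(j,j) \<noteq> 0}"
      proof (rule subsetI)
        fix j assume jm: "j \<in> {j\<in>{0..<n}. A'$$(j,j) \<noteq> 0}"
        hence j: "j < n" and nz: "A' $$ (j,j) \<noteq> 0" by auto
        have "A $$ (j,j) \<noteq> 0"
        proof
          assume jj0: "A $$ (j,j) = 0"
          hence "A $$ (i,j) = 0" using psd_zero_diag[OF P i] j by auto
          hence "A $$ (j,i) = 0" using symA i j by auto
          hence "A' $$ (j,j) = 0" using j jj0 unfolding A'_def by simp
          thus False using nz by simp
        qed
        thus "j \<in> {j\<in>{0..<n}. A$$(j,j) \<noteq> 0}" using j by auto
      qed
      have "A' $$ (i,i) = 0" unfolding A'_def using i a by (simp add: power2_eq_square)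
      hence n1: "i \<notin> {j\<in>{0..<n}. A'$$(j,j) \<noteq> 0}" by simp
      have n2: "i \<in> {j\<in>{0..<n}. A$$(j,j) \<noteq> 0}" using i ne by simp
      show "{j\<in>{0..<n}. A'$$(j,j) \<noteq> 0} \<noteq> {j\<in>{0..<n}. A$$(j,j) \<noteq> 0}"
      proof
        assume "{j\<in>{0..<n}. A'$$(j,j) \<noteq> 0} = {j\<in>{0..<n}. A$$(j,j) \<noteq> 0}"
        thus False using n1 n2 by simp
      qed
    qed
    hence lt: "card {j\<in>{0..<n}. A'$$(j,j) \<noteq> 0} < N" using less(2) psubset_card_mono[OF _ sub] by simp
    from less(1)[OF lt refl P'] obtain m W' where W': "W' \<in> carrier_mat n m" and AW': "A' = W' * W'\<^sup>T"
      and fcr: "\<forall>z\<in>carrier_vec m. W' *\<^sub>v z = 0\<^sub>v n \<longrightarrow> z = 0\<^sub>v m" by auto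
    have "A' $$ (i,i) = 0" unfolding A'_def using i a by simp
    hence "(\<Sum>k=0..<m. W' $$ (i,k) * W' $$ (i,k)) = 0" using AW' W' i by (simp add: scalar_prod_def)
    hence rowi: "W' $$ (i,k) = 0" if "k < m" for k
      using sum_nonneg_eq_0_iff[of "{0..<m}" "\<lambda>k. W' $$ (i,k) * W' $$ (i,k)"] that by auto
    define W where "W = mat n (Suc m) (\<lambda>(j,k). if k = 0 then A$$(j,i) / sqrt ?a else W' $$ (j, k - 1))"
    have Wc: "W \<in> carrier_mat n (Suc m)" unfolding W_def by auto
    have sq: "sqrt ?a * sqrt ?a = ?a" using a by simp
    have AW: "A = W * W\<^sup>T"
    proof (rule eq_matI)
      fix j l assume "j < dim_row (W * W\<^sup>T)" "l < dim_col (W * W\<^sup>T)"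
      hence j: "j < n" and l: "l < n" using Wc by auto
      have "(W * W\<^sup>T) $$ (j,l) = (\<Sum>k=0..<Suc m. W $$ (j,k) * W $$ (l,k))"
        using j l Wc by (simp add: scalar_prod_def)
      also have "\<dots> = A$$(j,i) / sqrt ?a * (A$$(l,i) / sqrt ?a) + (\<Sum>k=0..<m. W' $$ (j,k) * W' $$ (l,k))"
        by (subst sum.atLeast0_lessThan_Suc_shift, insert j l, simp add: W_def)
      also have "(\<Sum>k=0..<m. W' $$ (j,k) * W' $$ (l,k)) = A' $$ (j,l)"
        using AW' W' j l by (simp add: scalar_prod_def)
      also have "A$$(j,i) / sqrt ?a * (A$$(l,i) / sqrt ?a) = A$$(j,i) * A$$(l,i) / ?a"
        using sq by (simp add: field_simps)
      finally show "A $$ (j,l) = (W * W\<^sup>T) $$ (j,l)" unfolding A'_def using j l by simp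
    qed (insert A Wc, auto)
    moreover have col: "\<forall>z\<in>carrier_vec (Suc m). W *\<^sub>v z = 0\<^sub>v n \<longrightarrow> z = 0\<^sub>v (Suc m)"
    proof (intro ballI impI)
      fix z :: "real vec" assume z: "z \<in> carrier_vec (Suc m)" and Wz: "W *\<^sub>v z = 0\<^sub>v n"
      have ent: "(W *\<^sub>v z) $ j = A$$(j,i) / sqrt ?a * z $ 0 + (\<Sum>k=0..<m. W' $$ (j,k) * z $ Suc k)"
        if j: "j < n" for j
      proof -
        have "(W *\<^sub>v z) $ j = (\<Sum>k=0..<Suc m. W $$ (j,k) * z $ k)"
          using j Wc z by (simp add: scalar_prod_def)
        also have "\<dots> = A$$(j,i) / sqrt ?a * z $ 0 + (\<Sum>k=0..<m. W' $$ (j,k) * z $ Suc k)"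
          by (subst sum.atLeast0_lessThan_Suc_shift, insert j, simp add: W_def)
        finally show ?thesis .
      qed
      have "(\<Sum>k=0..<m. W' $$ (i,k) * z $ Suc k) = 0" by (rule sum.neutral, auto simp: rowi)
      hence "(W *\<^sub>v z) $ i = ?a / sqrt ?a * z $ 0" using ent[OF i] by simp
      also have "?a / sqrt ?a = sqrt ?a" using sq a by (metis real_div_sqrt less_imp_le)
      finally have "(W *\<^sub>v z) $ i = sqrt ?a * z $ 0" .
      hence z0: "z $ 0 = 0" using Wz i a by simp
      define z' where "z' = vec m (\<lambda>k. z $ Suc k)"
      have "W' *\<^sub>v z' = 0\<^sub>v n"
      proof (rule eq_vecI)
        fix j assume "j < dim_vec (0\<^sub>v n :: real vec)"
        hence j: "j < n" by simp
        have "(W' *\<^sub>v z') $ j = (\<Sum>k=0..<m. W' $$ (j,k) * z $ Suc k)"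
          using j W' by (simp add: scalar_prod_def z'_def)
        also have "\<dots> = (W *\<^sub>v z) $ j" using ent[OF j] z0 by simp
        finally show "(W' *\<^sub>v z') $ j = 0\<^sub>v n $ j" using Wz j by simp
      qed (insert W', auto)
      hence "z' = 0\<^sub>v m" using fcr unfolding z'_def by auto
      hence zs: "z $ Suc k = 0" if "k < m" for k using that unfolding z'_def
        by (metis dim_vec index_vec index_zero_vec(1))
      show "z = 0\<^sub>v (Suc m)"
      proof (rule eq_vecI)
        fix k assume "k < dim_vec (0\<^sub>v (Suc m) :: real vec)"
        hence k: "k < Suc m" by simp
        show "z $ k = 0\<^sub>v (Suc m) $ k"
        proof (cases k)
          case 0 then show ?thesis using z0 by simp
        next
          case (Suc k') then show ?thesis using zs[of k'] k by simp
        qed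
      qed (insert z, simp)
    qed
    ultimately show ?thesis by (intro exI[of _ "Suc m"] exI[of _ W] conjI Wc AW col)
  qed
qed

lemma gram:
  assumes "psd n A"
  shows "\<exists>m W. W \<in> carrier_mat n m \<and> A = W * W\<^sup>T \<and> (\<forall>z\<in>carrier_vec m. W *\<^sub>v z = 0\<^sub>v n \<longrightarrow> z = 0\<^sub>v m)"
  using gram_aux[OF refl assms] .

lemma sprod_self_nonneg: "(v::real vec) \<bullet> v \<ge> 0"
  unfolding scalar_prod_def by (intro sum_nonneg, auto)

lemma sprod_self_zero: assumes v: "(v::real vec) \<in> carrier_vec n" and z: "v \<bullet> v = 0"
  shows "v = 0\<^sub>v n"
proof -
  have "\<forall>i\<in>{0..<n}. v $ i * v $ i = 0"
    using z v sum_nonneg_eq_0_iff[of "{0..<n}" "\<lambda>i. v $ i * v $ i"] unfolding scalar_prod_def by auto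
  thus ?thesis using v by (intro eq_vecI, auto)
qed

lemma sum_div_mod:
  fixes n1 n2 :: nat and f :: "nat \<Rightarrow> nat \<Rightarrow> real"
  shows "(\<Sum>t = 0..<n1*n2. f (t div n2) (t mod n2)) = (\<Sum>s = 0..<n1. \<Sum>u = 0..<n2. (f s u :: real))"
proof (induct n1)
  case 0 then show ?case by simp
next
  case (Suc n1)
  have "(\<Sum>t = 0..<Suc n1*n2. f (t div n2) (t mod n2)) =
        (\<Sum>t = 0..<n1*n2. f (t div n2) (t mod n2)) + (\<Sum>t = n1*n2..<n1*n2+n2. f (t div n2) (t mod n2))"
    by (subst sum.atLeastLessThan_concat, auto simp: add.commute)
  also have "(\<Sum>t = n1*n2..<n1*n2+n2. f (t div n2) (t mod n2)) = (\<Sum>u = 0..<n2. f ((u + n1*n2) div n2) ((u + n1*n2) mod n2))"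
    using sum.shift_bounds_nat_ivl[of "\<lambda>t. f (t div n2) (t mod n2)" 0 "n1*n2" n2] by (simp add: add.commute)
  also have "\<dots> = (\<Sum>u = 0..<n2. f n1 u)"
    by (intro sum.cong refl, auto)
  finally show ?case using Suc by simp
qed

lemma kron_carrier[simp]: "kron A B \<in> carrier_mat (dim_row A * dim_row B) (dim_col A * dim_col B)"
  unfolding kron_def by auto

lemma kron_dims[simp]: "dim_row (kron A B) = dim_row A * dim_row B" "dim_col (kron A B) = dim_col A * dim_col B"
  unfolding kron_def by auto

lemma div_lt: "(i::nat) < a * b \<Longrightarrow> i div b < a"
  by (simp add: less_mult_imp_div_less)
lemma mod_lt: "(i::nat) < a * b \<Longrightarrow> i mod b < b"
  by (metis mod_less_divisor mult_0_right neq0_conv not_less_zero)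

lemma kron_index[simp]: "i < dim_row A * dim_row B \<Longrightarrow> j < dim_col A * dim_col B \<Longrightarrow>
  kron A B $$ (i,j) = A $$ (i div dim_row B, j div dim_col B) * B $$ (i mod dim_row B, j mod dim_col B)"
  unfolding kron_def by simp

lemma kron_transpose: "(kron A B)\<^sup>T = kron A\<^sup>T B\<^sup>T"
proof (rule eq_matI)
  fix i j assume "i < dim_row (kron A\<^sup>T B\<^sup>T)" "j < dim_col (kron A\<^sup>T B\<^sup>T)"
  hence i: "i < dim_col A * dim_col B" and j: "j < dim_row A * dim_row B" by auto
  show "(kron A B)\<^sup>T $$ (i, j) = kron A\<^sup>T B\<^sup>T $$ (i, j)"
    using i j div_lt[OF i] div_lt[OF j] mod_lt[OF i] mod_lt[OF j] by simp
qed auto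

lemma kron_mult:
  assumes A: "A \<in> carrier_mat ra n1" and C: "C \<in> carrier_mat n1 ca"
    and B: "B \<in> carrier_mat rb n2" and D: "D \<in> carrier_mat n2 cb"
  shows "kron A B * kron C D = kron (A * C) (B * D)"
proof (rule eq_matI)
  fix i j assume "i < dim_row (kron (A * C) (B * D))" "j < dim_col (kron (A * C) (B * D))"
  hence i: "i < ra * rb" and j: "j < ca * cb" using A B C D by auto
  have id: "i div rb < ra" "i mod rb < rb" using i div_lt mod_lt by auto
  have jd: "j div cb < ca" "j mod cb < cb" using j div_lt mod_lt by auto
  have "(kron A B * kron C D) $$ (i,j) = (\<Sum>t = 0..<n1*n2. kron A B $$ (i,t) * kron C D $$ (t,j))"
    using i j A B C D by (simp add: scalar_prod_def)
  also have "\<dots> = (\<Sum>t = 0..<n1*n2. (\<lambda>s u. (A $$ (i div rb, s) * C $$ (s, j div cb)) * (B $$ (i mod rb, u) * D $$ (u, j mod cb))) (t div n2) (t mod n2))"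
    by (intro sum.cong refl, insert i j A B C D, auto)
  also have "\<dots> = (\<Sum>s = 0..<n1. \<Sum>u = 0..<n2. (A $$ (i div rb, s) * C $$ (s, j div cb)) * (B $$ (i mod rb, u) * D $$ (u, j mod cb)))"
    by (rule sum_div_mod)
  also have "\<dots> = (\<Sum>s = 0..<n1. A $$ (i div rb, s) * C $$ (s, j div cb)) * (\<Sum>u = 0..<n2. B $$ (i mod rb, u) * D $$ (u, j mod cb))"
    by (simp add: sum_product)
  also have "\<dots> = kron (A * C) (B * D) $$ (i,j)"
    using i j id jd A B C D by (simp add: scalar_prod_def)
  finally show "(kron A B * kron C D) $$ (i,j) = kron (A * C) (B * D) $$ (i,j)" .
qed (insert A B C D, auto)

lemma kron_one: "kron (1\<^sub>m a) (1\<^sub>m b) = (1\<^sub>m (a * b) :: real mat)"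
proof (rule eq_matI)
  fix i j assume "i < dim_row (1\<^sub>m (a * b) :: real mat)" "j < dim_col (1\<^sub>m (a * b) :: real mat)"
  hence i: "i < a * b" and j: "j < a * b" by auto
  have "(i div b = j div b \<and> i mod b = j mod b) = (i = j)"
    by (metis div_mult_mod_eq)
  thus "kron (1\<^sub>m a) (1\<^sub>m b) $$ (i, j) = (1\<^sub>m (a * b) :: real mat) $$ (i, j)"
    using i j div_lt[OF i] div_lt[OF j] mod_lt[OF i] mod_lt[OF j] by auto
qed auto

lemma kron_minus_right:
  assumes B: "B \<in> carrier_mat rb cb" and C: "C \<in> carrier_mat rb cb"
  shows "kron A (B - C) = kron A B - kron A C"
proof (rule eq_matI)
  fix i j assume "i < dim_row (kron A B - kron A C)" "j < dim_col (kron A B - kron A C)"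
  hence i: "i < dim_row A * rb" and j: "j < dim_col A * cb" using B C by auto
  show "kron A (B - C) $$ (i, j) = (kron A B - kron A C) $$ (i, j)"
    using i j B C mod_lt[OF i] mod_lt[OF j] by (simp add: algebra_simps)
qed (insert B C, auto)

lemma psd_gram: assumes W: "(W :: real mat) \<in> carrier_mat n m" shows "psd n (W * W\<^sup>T)"
proof -
  have c: "W * W\<^sup>T \<in> carrier_mat n n" using W by auto
  have s: "symmetric_mat (W * W\<^sup>T)" unfolding symmetric_mat_def
    using transpose_mult[OF W, of "W\<^sup>T" n] W by simp
  have q: "x \<bullet> ((W * W\<^sup>T) *\<^sub>v x) \<ge> 0" if x: "x \<in> carrier_vec n" for x
  proof -
    have "(W * W\<^sup>T) *\<^sub>v x = W *\<^sub>v (W\<^sup>T *\<^sub>v x)" using W x by auto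
    hence "x \<bullet> ((W * W\<^sup>T) *\<^sub>v x) = (W\<^sup>T *\<^sub>v x) \<bullet> (W\<^sup>T *\<^sub>v x)"
      using transpose_vec_mult_scalar[OF W, of "W\<^sup>T *\<^sub>v x" x] W x by simp
    thus ?thesis using sprod_self_nonneg by simp
  qed
  show ?thesis unfolding psd_def using c s q by auto
qed

lemma quad_congr:
  assumes T: "(T :: real mat) \<in> carrier_mat m n" and A: "A \<in> carrier_mat m m" and x: "x \<in> carrier_vec n"
  shows "x \<bullet> ((T\<^sup>T * A * T) *\<^sub>v x) = (T *\<^sub>v x) \<bullet> (A *\<^sub>v (T *\<^sub>v x))"
proof -
  have "(T\<^sup>T * A * T) *\<^sub>v x = (T\<^sup>T * A) *\<^sub>v (T *\<^sub>v x)"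
    by (rule assoc_mult_mat_vec[of _ n m], insert T A x, auto)
  also have "\<dots> = T\<^sup>T *\<^sub>v (A *\<^sub>v (T *\<^sub>v x))"
    by (rule assoc_mult_mat_vec[of _ n m], insert T A x, auto)
  finally have "(T\<^sup>T * A * T) *\<^sub>v x = T\<^sup>T *\<^sub>v (A *\<^sub>v (T *\<^sub>v x))" .
  moreover have "(T\<^sup>T *\<^sub>v (A *\<^sub>v (T *\<^sub>v x))) \<bullet> x = (A *\<^sub>v (T *\<^sub>v x)) \<bullet> (T *\<^sub>v x)"
    by (rule transpose_vec_mult_scalar[OF T x], insert A T x, auto)
  moreover have "(A *\<^sub>v (T *\<^sub>v x)) \<bullet> (T *\<^sub>v x) = (T *\<^sub>v x) \<bullet> (A *\<^sub>v (T *\<^sub>v x))"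
    by (rule comm_scalar_prod[of _ m], insert A T x, auto)
  moreover have "x \<bullet> (T\<^sup>T *\<^sub>v (A *\<^sub>v (T *\<^sub>v x))) = (T\<^sup>T *\<^sub>v (A *\<^sub>v (T *\<^sub>v x))) \<bullet> x"
    by (rule comm_scalar_prod[of _ n], insert A T x, auto)
  ultimately show ?thesis by simp
qed

lemma psd_congr: assumes P: "psd m A" and T: "T \<in> carrier_mat m n" shows "psd n (T\<^sup>T * A * T)"
proof -
  have A: "A \<in> carrier_mat m m" and sA: "A\<^sup>T = A" using P unfolding psd_def symmetric_mat_def by auto
  have c: "T\<^sup>T * A * T \<in> carrier_mat n n" using T A by auto
  have "(T\<^sup>T * A * T)\<^sup>T = T\<^sup>T * (T\<^sup>T * A)\<^sup>T"
    using transpose_mult[of "T\<^sup>T * A" n m T n] T A by simp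
  also have "(T\<^sup>T * A)\<^sup>T = A\<^sup>T * T"
    using transpose_mult[of "T\<^sup>T" n m A m] T A by simp
  finally have "(T\<^sup>T * A * T)\<^sup>T = T\<^sup>T * A\<^sup>T * T" using T A by simp
  hence s: "symmetric_mat (T\<^sup>T * A * T)" unfolding symmetric_mat_def using sA by simp
  have q: "x \<bullet> ((T\<^sup>T * A * T) *\<^sub>v x) \<ge> 0" if x: "x \<in> carrier_vec n" for x
    using quad_congr[OF T A x] P T x unfolding psd_def by auto
  show ?thesis unfolding psd_def using c s q by auto
qed

lemma psd_add: assumes P: "psd n A" and Q: "psd n B" shows "psd n (A + B)"
proof -
  have A: "A \<in> carrier_mat n n" and B: "B \<in> carrier_mat n n" using P Q unfolding psd_def by auto
  have s: "symmetric_mat (A + B)" using P Q A B unfolding psd_def symmetric_mat_def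
    by (simp add: transpose_add)
  have q: "x \<bullet> ((A + B) *\<^sub>v x) \<ge> 0" if x: "x \<in> carrier_vec n" for x
  proof -
    have "x \<bullet> ((A + B) *\<^sub>v x) = x \<bullet> (A *\<^sub>v x) + x \<bullet> (B *\<^sub>v x)"
      using A B x by (simp add: add_mult_distrib_mat_vec scalar_prod_add_distrib[of _ n])
    thus ?thesis using P Q x unfolding psd_def by auto
  qed
  show ?thesis unfolding psd_def using A B s q by auto
qed

lemma psd_kron: assumes P: "psd a A" and Q: "psd b B" shows "psd (a * b) (kron A B)"
proof -
  obtain m W where W: "W \<in> carrier_mat a m" and AW: "A = W * W\<^sup>T" using gram[OF P] by blast
  obtain k V where V: "V \<in> carrier_mat b k" and BV: "B = V * V\<^sup>T" using gram[OF Q] by blast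
  have "kron A B = kron W V * kron W\<^sup>T V\<^sup>T" unfolding AW BV
    by (rule kron_mult[symmetric], insert W V, auto)
  also have "\<dots> = kron W V * (kron W V)\<^sup>T" by (simp add: kron_transpose)
  finally have e: "kron A B = kron W V * (kron W V)\<^sup>T" .
  have "kron W V \<in> carrier_mat (a * b) (m * k)" using W V kron_carrier[of W V] by auto
  from psd_gram[OF this] show ?thesis unfolding e .
qed

lemma inv_unique:
  assumes A: "(A::real mat) \<in> carrier_mat n n" and B: "B \<in> carrier_mat n n"
    and AB: "A * B = 1\<^sub>m n" and BA: "B * A = 1\<^sub>m n"
  shows "mat_inv A = B"
  unfolding mat_inv_def
proof (rule the_equality)
  show "B \<in> carrier_mat (dim_row A) (dim_row A) \<and> A * B = 1\<^sub>m (dim_row A) \<and> B * A = 1\<^sub>m (dim_row A)"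
    using A B AB BA by auto
next
  fix X assume "X \<in> carrier_mat (dim_row A) (dim_row A) \<and> A * X = 1\<^sub>m (dim_row A) \<and> X * A = 1\<^sub>m (dim_row A)"
  hence X: "X \<in> carrier_mat n n" and XA: "X * A = 1\<^sub>m n" using A by auto
  have "X = X * (A * B)" using X AB by simp
  also have "\<dots> = (X * A) * B" using X A B by simp
  also have "\<dots> = B" using XA B by simp
  finally show "X = B" .
qed

lemma inv_exists:
  assumes A: "(A::real mat) \<in> carrier_mat n n"
    and ker: "\<And>v. v \<in> carrier_vec n \<Longrightarrow> A *\<^sub>v v = 0\<^sub>v n \<Longrightarrow> v = 0\<^sub>v n"
  shows "mat_inv A \<in> carrier_mat n n \<and> A * mat_inv A = 1\<^sub>m n \<and> mat_inv A * A = 1\<^sub>m n"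
proof -
  have "det A \<noteq> 0" using det_0_iff_vec_prod_zero[OF A] ker by auto
  from det_non_zero_imp_unit[OF A this, unfolded Units_def, of "()"]
  obtain B where B: "B \<in> carrier_mat n n" and BA: "B * A = 1\<^sub>m n" and AB: "A * B = 1\<^sub>m n"
    by (auto simp: ring_mat_def)
  have "mat_inv A = B" by (rule inv_unique[OF A B AB BA])
  thus ?thesis using B AB BA by simp
qed

lemma pd_ker: assumes P: "pos_def n A" and v: "v \<in> carrier_vec n" and z: "A *\<^sub>v v = 0\<^sub>v n"
  shows "v = 0\<^sub>v n"
proof (rule ccontr)
  assume "v \<noteq> 0\<^sub>v n"
  hence "v \<bullet> (A *\<^sub>v v) > 0" using P v unfolding pos_def_def by auto
  thus False using z v by simp
qed

lemma pd_inv: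
  assumes P: "pos_def n A"
  shows "mat_inv A \<in> carrier_mat n n \<and> A * mat_inv A = 1\<^sub>m n \<and> mat_inv A * A = 1\<^sub>m n"
  by (rule inv_exists, insert P pd_ker[OF P], auto simp: pos_def_def)

lemma inv_sym:
  assumes A: "(A::real mat) \<in> carrier_mat n n" and s: "A\<^sup>T = A"
    and I: "mat_inv A \<in> carrier_mat n n \<and> A * mat_inv A = 1\<^sub>m n \<and> mat_inv A * A = 1\<^sub>m n"
  shows "(mat_inv A)\<^sup>T = mat_inv A"
proof -
  let ?B = "mat_inv A"
  have B: "?B \<in> carrier_mat n n" using I by auto
  have "A * ?B\<^sup>T = (?B * A)\<^sup>T" using transpose_mult[OF B A] s by simp
  hence 1: "A * ?B\<^sup>T = 1\<^sub>m n" using I by simp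
  have "?B\<^sup>T * A = (A * ?B)\<^sup>T" using transpose_mult[OF A B] s by simp
  hence 2: "?B\<^sup>T * A = 1\<^sub>m n" using I by simp
  have "mat_inv A = ?B\<^sup>T" by (rule inv_unique[OF A _ 1 2], insert B, auto)
  thus ?thesis by simp
qed

lemma pd_psd: "pos_def n A \<Longrightarrow> psd n A"
  unfolding pos_def_def psd_def
  by (metis less_eq_real_def mult_mat_vec_carrier scalar_prod_left_zero zero_carrier_vec)

lemma pd_inv_pd:
  assumes P: "pos_def n A"
  shows "pos_def n (mat_inv A)"
proof -
  have A: "A \<in> carrier_mat n n" and s: "A\<^sup>T = A" using P unfolding pos_def_def symmetric_mat_def by auto
  have I: "mat_inv A \<in> carrier_mat n n \<and> A * mat_inv A = 1\<^sub>m n \<and> mat_inv A * A = 1\<^sub>m n" using pd_inv[OF P] .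
  let ?B = "mat_inv A"
  have B: "?B \<in> carrier_mat n n" using I by auto
  have q: "x \<bullet> (?B *\<^sub>v x) > 0" if x: "x \<in> carrier_vec n" and nz: "x \<noteq> 0\<^sub>v n" for x
  proof -
    let ?y = "?B *\<^sub>v x"
    have y: "?y \<in> carrier_vec n" using B x by auto
    have xy: "x = A *\<^sub>v ?y"
    proof -
      have "A *\<^sub>v ?y = (A * ?B) *\<^sub>v x" using A B x by simp
      thus ?thesis using I x by simp
    qed
    have ynz: "?y \<noteq> 0\<^sub>v n" using xy nz A by auto
    have "x \<bullet> ?y = (A *\<^sub>v ?y) \<bullet> ?y" using xy by simp
    also have "\<dots> = ?y \<bullet> (A *\<^sub>v ?y)" by (rule comm_scalar_prod[of _ n], insert A y, auto)
    also have "\<dots> > 0" using P y ynz unfolding pos_def_def by auto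
    finally show ?thesis .
  qed
  show ?thesis unfolding pos_def_def symmetric_mat_def using B inv_sym[OF A s I] q by auto
qed

lemma mp_unique:
  assumes A: "(A::real mat) \<in> carrier_mat n n" and X: "X \<in> carrier_mat n n" and Y: "Y \<in> carrier_mat n n"
    and X1: "A * X * A = A" and X3: "(A * X)\<^sup>T = A * X" and X4: "(X * A)\<^sup>T = X * A" and X2: "X * A * X = X"
    and Y1: "A * Y * A = A" and Y3: "(A * Y)\<^sup>T = A * Y" and Y4: "(Y * A)\<^sup>T = Y * A" and Y2: "Y * A * Y = Y"
  shows "X = Y"
proof -
  have cn[simp]: "P \<in> carrier_mat n n \<Longrightarrow> Q \<in> carrier_mat n n \<Longrightarrow> P * Q \<in> carrier_mat n n" for P Q :: "real mat"
    by simp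
  have as: "P \<in> carrier_mat n n \<Longrightarrow> Q \<in> carrier_mat n n \<Longrightarrow> R \<in> carrier_mat n n \<Longrightarrow> P * Q * R = P * (Q * R)"
    for P Q R :: "real mat" by simp
  note [simp] = A X Y
  have AX: "A * X = A * Y"
  proof -
    have "A * X = (A * Y * A) * X" using Y1 by simp
    also have "\<dots> = (A * Y) * (A * X)" by (simp add: as)
    also have "\<dots> = (A * Y)\<^sup>T * (A * X)\<^sup>T" using X3 Y3 by simp
    also have "\<dots> = ((A * X) * (A * Y))\<^sup>T" using transpose_mult[of "A * X" n n "A * Y" n] A X Y by simp
    also have "(A * X) * (A * Y) = (A * X * A) * Y" by (simp add: as)
    also have "\<dots> = A * Y" using X1 by simp
    finally show ?thesis using Y3 by simp
  qed
  have XA: "X * A = Y * A"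
  proof -
    have "X * A = X * (A * Y * A)" using Y1 by simp
    also have "\<dots> = (X * A) * (Y * A)" by (simp add: as)
    also have "\<dots> = (X * A)\<^sup>T * (Y * A)\<^sup>T" using X4 Y4 by simp
    also have "\<dots> = ((Y * A) * (X * A))\<^sup>T" using transpose_mult[of "Y * A" n n "X * A" n] A X Y by simp
    also have "(Y * A) * (X * A) = Y * (A * X * A)" by (simp add: as)
    also have "\<dots> = Y * A" using X1 by simp
    finally show ?thesis using Y4 by simp
  qed
  have "X = X * A * X" using X2 by simp
  also have "\<dots> = X * (A * Y)" using AX by (simp add: as)
  also have "\<dots> = (Y * A) * Y" using XA by (simp add: as flip: XA)
  also have "\<dots> = Y"
    using Y2 by simp
  finally show ?thesis .
qed

lemma assoc':
  assumes "dim_col A = dim_row B" "dim_col B = dim_row C"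
  shows "(A * B) * C = A * (B * (C :: real mat))"
proof -
  have a: "A \<in> carrier_mat (dim_row A) (dim_col A)" by (rule carrier_matI, auto)
  have b: "B \<in> carrier_mat (dim_col A) (dim_col B)" by (rule carrier_matI, insert assms, auto)
  have c: "C \<in> carrier_mat (dim_col B) (dim_col C)" by (rule carrier_matI, insert assms, auto)
  show ?thesis by (rule assoc_mult_mat[OF a b c])
qed

lemma transpose_mult':
  assumes "dim_col A = dim_row B"
  shows "(A * B)\<^sup>T = B\<^sup>T * (A\<^sup>T :: real mat)"
proof -
  have a: "A \<in> carrier_mat (dim_row A) (dim_col A)" by (rule carrier_matI, auto)
  have b: "B \<in> carrier_mat (dim_col A) (dim_col B)" by (rule carrier_matI, insert assms, auto)
  show ?thesis by (rule transpose_mult[OF a b])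
qed

lemma mp_psd:
  assumes P: "psd n M"
  shows "moore_penrose M \<in> carrier_mat n n \<and> psd n (moore_penrose M)"
proof -
  have Mc: "M \<in> carrier_mat n n" using P unfolding psd_def by auto
  obtain m W where W: "W \<in> carrier_mat n m" and MW: "M = W * W\<^sup>T"
    and fcr: "\<forall>z\<in>carrier_vec m. W *\<^sub>v z = 0\<^sub>v n \<longrightarrow> z = 0\<^sub>v m" using gram[OF P] by blast
  define G where "G = W\<^sup>T * W"
  have G: "G \<in> carrier_mat m m" unfolding G_def using W by auto
  have Gs: "G\<^sup>T = G" unfolding G_def using transpose_mult[of "W\<^sup>T" m n W m] W by simp
  have ker: "z = 0\<^sub>v m" if z: "z \<in> carrier_vec m" and Gz: "G *\<^sub>v z = 0\<^sub>v m" for z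
  proof -
    have "G *\<^sub>v z = W\<^sup>T *\<^sub>v (W *\<^sub>v z)" unfolding G_def using W z by auto
    moreover have "(W\<^sup>T *\<^sub>v (W *\<^sub>v z)) \<bullet> z = (W *\<^sub>v z) \<bullet> (W *\<^sub>v z)"
      by (rule transpose_vec_mult_scalar[OF W z], insert W z, auto)
    ultimately have "(W *\<^sub>v z) \<bullet> (W *\<^sub>v z) = 0\<^sub>v m \<bullet> z" using Gz by simp
    hence "(W *\<^sub>v z) \<bullet> (W *\<^sub>v z) = 0" using z by simp
    hence "W *\<^sub>v z = 0\<^sub>v n" by (rule sprod_self_zero[rotated], insert W z, auto)
    thus ?thesis using fcr z by auto
  qed
  define Gi where "Gi = mat_inv G"
  have GI: "Gi \<in> carrier_mat m m \<and> G * Gi = 1\<^sub>m m \<and> Gi * G = 1\<^sub>m m"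
    unfolding Gi_def by (rule inv_exists[OF G ker])
  have Gic: "Gi \<in> carrier_mat m m" and GGi: "G * Gi = 1\<^sub>m m" and GiG: "Gi * G = 1\<^sub>m m" using GI by auto
  have Gis: "Gi\<^sup>T = Gi" unfolding Gi_def by (rule inv_sym[OF G Gs GI[unfolded Gi_def]])
  have dims[simp]: "dim_row W = n" "dim_col W = m" "dim_row Gi = m" "dim_col Gi = m" "dim_row G = m" "dim_col G = m"
    using W Gic G by auto
  have r1: "W\<^sup>T * (W * Z) = G * Z" if "dim_row Z = m" for Z
    unfolding G_def using that by (simp add: assoc')
  have r2: "G * (Gi * Z) = Z" if "dim_row Z = m" for Z
    using that by (simp flip: assoc' add: GGi)
  have r3: "Gi * (G * Z) = Z" if "dim_row Z = m" for Z
    using that by (simp flip: assoc' add: GiG)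
  have r1': "W\<^sup>T * W = G" unfolding G_def ..
  define X where "X = (W * Gi) * (W * Gi)\<^sup>T"
  have XX: "X = W * (Gi * (Gi * W\<^sup>T))" unfolding X_def by (simp add: transpose_mult' Gis assoc')
  have Xc: "X \<in> carrier_mat n n" unfolding XX using W Gic by auto
  have WGi: "W * Gi \<in> carrier_mat n m" using W Gic by simp
  have Xp: "psd n X" unfolding X_def by (rule psd_gram[OF WGi])
  have MX: "M * X = W * (Gi * W\<^sup>T)" unfolding MW XX by (simp add: assoc' r1 r2)
  have XM: "X * M = W * (Gi * W\<^sup>T)" unfolding MW XX by (simp add: assoc' r1 r3)
  have MXM: "M * X * M = M" unfolding MX unfolding MW by (simp add: assoc' r1 r3)
  have XMX: "X * M * X = X" unfolding XM unfolding XX by (simp add: assoc' r1 r3)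
  have sym: "(W * (Gi * W\<^sup>T))\<^sup>T = W * (Gi * W\<^sup>T)" by (simp add: transpose_mult' Gis assoc')
  have cond: "X \<in> carrier_mat (dim_col M) (dim_row M) \<and> M * X * M = M \<and> X * M * X = X \<and> (M * X)\<^sup>T = M * X \<and> (X * M)\<^sup>T = X * M"
    using Xc Mc MXM XMX sym MX XM by auto
  have "moore_penrose M = X" unfolding moore_penrose_def
  proof (rule the_equality)
    show "X \<in> carrier_mat (dim_col M) (dim_row M) \<and> M * X * M = M \<and> X * M * X = X \<and> (M * X)\<^sup>T = M * X \<and> (X * M)\<^sup>T = X * M"
      by (rule cond)
  next
    fix Y assume "Y \<in> carrier_mat (dim_col M) (dim_row M) \<and> M * Y * M = M \<and> Y * M * Y = Y \<and> (M * Y)\<^sup>T = M * Y \<and> (Y * M)\<^sup>T = Y * M"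
    hence Y: "Y \<in> carrier_mat n n" and Y1: "M * Y * M = M" and Y2: "Y * M * Y = Y"
      and Y3: "(M * Y)\<^sup>T = M * Y" and Y4: "(Y * M)\<^sup>T = Y * M" using Mc by auto
    show "Y = X" by (rule mp_unique[OF Mc Y Xc Y1 Y3 Y4 Y2], insert MXM XMX sym MX XM, auto)
  qed
  thus ?thesis using Xc Xp by simp
qed

lemma mult_minus':
  assumes "dim_col A = dim_row B" "dim_row B = dim_row C" "dim_col B = dim_col C"
  shows "A * (B - C) = A * B - A * (C :: real mat)"
proof -
  have a: "A \<in> carrier_mat (dim_row A) (dim_col A)" by (rule carrier_matI, auto)
  have b: "B \<in> carrier_mat (dim_col A) (dim_col B)" by (rule carrier_matI, insert assms, auto)
  have c: "C \<in> carrier_mat (dim_col A) (dim_col B)" by (rule carrier_matI, insert assms, auto)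
  show ?thesis by (rule mult_minus_distrib_mat[OF a b c])
qed

lemma minus_mult':
  assumes "dim_row A = dim_row B" "dim_col A = dim_col B" "dim_col A = dim_row C"
  shows "(A - B) * C = A * C - B * (C :: real mat)"
proof -
  have a: "A \<in> carrier_mat (dim_row A) (dim_col A)" by (rule carrier_matI, auto)
  have b: "B \<in> carrier_mat (dim_row A) (dim_col A)" by (rule carrier_matI, insert assms, auto)
  have c: "C \<in> carrier_mat (dim_col A) (dim_col C)" by (rule carrier_matI, insert assms, auto)
  show ?thesis by (rule minus_mult_distrib_mat[OF a b c])
qed

lemma mat_eq_vec:
  assumes A: "(A :: real mat) \<in> carrier_mat n k" and B: "B \<in> carrier_mat n k"
    and e: "\<And>x. x \<in> carrier_vec k \<Longrightarrow> A *\<^sub>v x = B *\<^sub>v x"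
  shows "A = B"
proof (rule eq_matI)
  fix i j assume "i < dim_row B" "j < dim_col B"
  hence i: "i < n" and j: "j < k" using B by auto
  have "A $$ (i,j) = (A *\<^sub>v unit_vec k j) $ i" using A i j by simp
  also have "\<dots> = (B *\<^sub>v unit_vec k j) $ i" using e[of "unit_vec k j"] by simp
  also have "\<dots> = B $$ (i,j)" using B i j by simp
  finally show "A $$ (i,j) = B $$ (i,j)" .
qed (insert A B, auto)

lemma pd_congr:
  assumes P: "pos_def m A" and T: "T \<in> carrier_mat m n"
    and ker: "\<And>z. z \<in> carrier_vec n \<Longrightarrow> T *\<^sub>v z = 0\<^sub>v m \<Longrightarrow> z = 0\<^sub>v n"
  shows "pos_def n (T\<^sup>T * A * T)"
proof -
  have A: "A \<in> carrier_mat m m" using P unfolding pos_def_def by auto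
  have ps: "psd n (T\<^sup>T * A * T)" by (rule psd_congr[OF pd_psd[OF P] T])
  have q: "x \<bullet> ((T\<^sup>T * A * T) *\<^sub>v x) > 0" if x: "x \<in> carrier_vec n" and nz: "x \<noteq> 0\<^sub>v n" for x
  proof -
    have "T *\<^sub>v x \<noteq> 0\<^sub>v m" using ker x nz by auto
    moreover have "T *\<^sub>v x \<in> carrier_vec m" using T x by auto
    ultimately have "(T *\<^sub>v x) \<bullet> (A *\<^sub>v (T *\<^sub>v x)) > 0" using P unfolding pos_def_def by auto
    thus ?thesis using quad_congr[OF T A x] by simp
  qed
  show ?thesis using ps q unfolding psd_def pos_def_def by auto
qed

lemma D_psd:
  assumes S: "pos_def r S" and U: "U \<in> carrier_mat r k"
    and Uker: "\<And>z. z \<in> carrier_vec k \<Longrightarrow> U *\<^sub>v z = 0\<^sub>v r \<Longrightarrow> z = 0\<^sub>v k"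
    and G: "Gamma \<in> carrier_mat r u" and GG: "Gamma\<^sup>T * Gamma = 1\<^sub>m u"
    and PU: "Gamma * Gamma\<^sup>T * U = U"
  shows "psd r (Gamma * (Gamma\<^sup>T * S * Gamma) * Gamma\<^sup>T - U * mat_inv (U\<^sup>T * mat_inv S * U) * U\<^sup>T)"
proof -
  have Sc: "S \<in> carrier_mat r r" and Ss: "S\<^sup>T = S" using S unfolding pos_def_def symmetric_mat_def by auto
  define Si where "Si = mat_inv S"
  have SI: "Si \<in> carrier_mat r r \<and> S * Si = 1\<^sub>m r \<and> Si * S = 1\<^sub>m r" unfolding Si_def by (rule pd_inv[OF S])
  have Sip: "pos_def r Si" unfolding Si_def by (rule pd_inv_pd[OF S])
  have Sis: "Si\<^sup>T = Si" using Sip unfolding pos_def_def symmetric_mat_def by auto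
  have Sic: "Si \<in> carrier_mat r r" and SSi: "S * Si = 1\<^sub>m r" and SiS: "Si * S = 1\<^sub>m r" using SI by auto
  define Wm where "Wm = U\<^sup>T * Si * U"
  have Wmp: "pos_def k Wm" unfolding Wm_def by (rule pd_congr[OF Sip U Uker])
  have Wmc: "Wm \<in> carrier_mat k k" using Wmp unfolding pos_def_def by auto
  define Wi where "Wi = mat_inv Wm"
  have WI: "Wi \<in> carrier_mat k k \<and> Wm * Wi = 1\<^sub>m k \<and> Wi * Wm = 1\<^sub>m k" unfolding Wi_def by (rule pd_inv[OF Wmp])
  have Wic: "Wi \<in> carrier_mat k k" and WmWi: "Wm * Wi = 1\<^sub>m k" and WiWm: "Wi * Wm = 1\<^sub>m k" using WI by auto
  have Wis: "Wi\<^sup>T = Wi" using pd_inv_pd[OF Wmp] unfolding Wi_def pos_def_def symmetric_mat_def by auto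
  have dims[simp]: "dim_row S = r" "dim_col S = r" "dim_row Si = r" "dim_col Si = r"
    "dim_row U = r" "dim_col U = k" "dim_row Wi = k" "dim_col Wi = k" "dim_row Gamma = r" "dim_col Gamma = u"
    using Sc Sic U Wic G by auto
  have PU': "Gamma * (Gamma\<^sup>T * (U * Z)) = U * Z" if "dim_row Z = k" for Z
  proof -
    have "Gamma * (Gamma\<^sup>T * (U * Z)) = (Gamma * Gamma\<^sup>T * U) * Z" using that by (simp add: assoc')
    thus ?thesis using PU by simp
  qed
  have UP0: "U\<^sup>T * (Gamma * Gamma\<^sup>T) = U\<^sup>T"
  proof -
    have "U\<^sup>T * (Gamma * Gamma\<^sup>T) = (Gamma * Gamma\<^sup>T * U)\<^sup>T" by (simp add: transpose_mult' assoc')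
    thus ?thesis using PU by simp
  qed
  have UP': "U\<^sup>T * (Gamma * (Gamma\<^sup>T * Z)) = U\<^sup>T * Z" if "dim_row Z = r" for Z
  proof -
    have "U\<^sup>T * (Gamma * (Gamma\<^sup>T * Z)) = (U\<^sup>T * (Gamma * Gamma\<^sup>T)) * Z" using that by (simp add: assoc')
    thus ?thesis using UP0 by simp
  qed
  have SS1: "Si * (S * Z) = Z" if "dim_row Z = r" for Z
  proof -
    have "Si * (S * Z) = (Si * S) * Z" using that by (simp add: assoc')
    thus ?thesis using SiS that by simp
  qed
  have SS2: "S * (Si * Z) = Z" if "dim_row Z = r" for Z
  proof -
    have "S * (Si * Z) = (S * Si) * Z" using that by (simp add: assoc')
    thus ?thesis using SSi that by simp
  qed
  have WW1: "U\<^sup>T * (Si * (U * (Wi * Z))) = Z" if "dim_row Z = k" for Z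
  proof -
    have "U\<^sup>T * (Si * (U * (Wi * Z))) = (Wm * Wi) * Z" unfolding Wm_def using that by (simp add: assoc')
    thus ?thesis using WmWi that by simp
  qed
  define Y where "Y = U * (Wi * U\<^sup>T)"
  define T where "T = S * (Gamma * Gamma\<^sup>T) - Y"
  have Tc: "T \<in> carrier_mat r r" unfolding T_def Y_def by auto
  have TT: "T\<^sup>T = Gamma * (Gamma\<^sup>T * S) - Y"
  proof -
    have "T\<^sup>T = (S * (Gamma * Gamma\<^sup>T))\<^sup>T - Y\<^sup>T" unfolding T_def Y_def
      by (rule transpose_minus, auto)
    also have "(S * (Gamma * Gamma\<^sup>T))\<^sup>T = Gamma * (Gamma\<^sup>T * S)" by (simp add: transpose_mult' Ss assoc')
    also have "Y\<^sup>T = Y" unfolding Y_def by (simp add: transpose_mult' Wis assoc')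
    finally show ?thesis .
  qed
  have step1: "T\<^sup>T * Si = Gamma * Gamma\<^sup>T - Y * Si"
    unfolding TT Y_def by (simp add: minus_mult' assoc' SSi)
  have "T\<^sup>T * Si * T = (Gamma * Gamma\<^sup>T - Y * Si) * T" unfolding step1 ..
  also have "\<dots> = (Gamma * (Gamma\<^sup>T * (S * (Gamma * Gamma\<^sup>T))) - Y) - (Y - Y)"
    unfolding T_def Y_def by (simp add: minus_mult' mult_minus' assoc' PU' UP' UP0 SS1 WW1)
  also have "\<dots> = Gamma * (Gamma\<^sup>T * S * Gamma) * Gamma\<^sup>T - U * mat_inv (U\<^sup>T * mat_inv S * U) * U\<^sup>T"
    unfolding Y_def Wi_def[symmetric] Wm_def[symmetric] Si_def[symmetric]
    by (rule eq_matI, auto simp: assoc')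
  finally have eq: "T\<^sup>T * Si * T = Gamma * (Gamma\<^sup>T * S * Gamma) * Gamma\<^sup>T - U * mat_inv (U\<^sup>T * mat_inv S * U) * U\<^sup>T" .
  show ?thesis unfolding eq[symmetric] by (rule psd_congr[OF pd_psd[OF Sip] Tc])
qed

lemma M_psd:
  assumes Om: "pos_def a Om" and Om0: "pos_def b Om0" and E: "psd a E"
  shows "psd (a * b) (kron E (mat_inv Om0) + kron Om (mat_inv Om0) + kron (mat_inv Om) Om0 - 2 \<cdot>\<^sub>m 1\<^sub>m (a * b))"
proof -
  have Omc: "Om \<in> carrier_mat a a" and Oms: "Om\<^sup>T = Om" using Om unfolding pos_def_def symmetric_mat_def by auto
  have Om0c: "Om0 \<in> carrier_mat b b" using Om0 unfolding pos_def_def by auto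
  have Ec: "E \<in> carrier_mat a a" using E unfolding psd_def by auto
  define Oi where "Oi = mat_inv Om"
  define Oi0 where "Oi0 = mat_inv Om0"
  have OI: "Oi \<in> carrier_mat a a \<and> Om * Oi = 1\<^sub>m a \<and> Oi * Om = 1\<^sub>m a" unfolding Oi_def by (rule pd_inv[OF Om])
  have OI0: "Oi0 \<in> carrier_mat b b \<and> Om0 * Oi0 = 1\<^sub>m b \<and> Oi0 * Om0 = 1\<^sub>m b" unfolding Oi0_def by (rule pd_inv[OF Om0])
  have Oip: "pos_def a Oi" unfolding Oi_def by (rule pd_inv_pd[OF Om])
  have Oi0p: "pos_def b Oi0" unfolding Oi0_def by (rule pd_inv_pd[OF Om0])
  have Oi0s: "Oi0\<^sup>T = Oi0" using Oi0p unfolding pos_def_def symmetric_mat_def by auto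
  have Oic: "Oi \<in> carrier_mat a a" and Oi0c: "Oi0 \<in> carrier_mat b b" using OI OI0 by auto
  define K where "K = kron Om Oi0"
  define L where "L = kron Oi Om0"
  have Kc: "K \<in> carrier_mat (a * b) (a * b)" unfolding K_def using Omc Oi0c kron_carrier[of Om Oi0] by auto
  have Lc: "L \<in> carrier_mat (a * b) (a * b)" unfolding L_def using Oic Om0c kron_carrier[of Oi Om0] by auto
  have KL: "K * L = 1\<^sub>m (a * b)" unfolding K_def L_def
    using kron_mult[OF Omc Oic Oi0c Om0c] OI OI0 kron_one by simp
  have LK: "L * K = 1\<^sub>m (a * b)" unfolding K_def L_def
    using kron_mult[OF Oic Omc Om0c Oi0c] OI OI0 kron_one by simp
  have Lp: "psd (a * b) L" unfolding L_def by (rule psd_kron[OF pd_psd[OF Oip] pd_psd[OF Om0]])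
  have Ks: "K\<^sup>T = K" unfolding K_def kron_transpose Oms Oi0s ..
  define N where "N = K - 1\<^sub>m (a * b)"
  have Nc: "N \<in> carrier_mat (a * b) (a * b)" unfolding N_def using Kc by auto
  have Ns: "N\<^sup>T = N" unfolding N_def using transpose_minus[OF Kc one_carrier_mat] Ks by simp
  have NLN: "N\<^sup>T * L * N = K + L - 2 \<cdot>\<^sub>m 1\<^sub>m (a * b)"
  proof -
    have NL: "N * L = 1\<^sub>m (a * b) - L" unfolding N_def
      using minus_mult_distrib_mat[OF Kc one_carrier_mat Lc] KL Lc by simp
    have "N\<^sup>T * L * N = (1\<^sub>m (a * b) - L) * N" by (simp only: Ns NL)
    also have "\<dots> = (1\<^sub>m (a * b) - L) * (K - 1\<^sub>m (a * b))" unfolding N_def ..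
    also have "\<dots> = (K - 1\<^sub>m (a * b)) - (L * K - L)"
      using minus_mult_distrib_mat[OF one_carrier_mat Lc, of "K - 1\<^sub>m (a * b)" "a * b"] 
        mult_minus_distrib_mat[OF Lc Kc one_carrier_mat] Kc Lc Nc[unfolded N_def] by simp
    also have "\<dots> = K + L - 2 \<cdot>\<^sub>m 1\<^sub>m (a * b)" unfolding LK
      by (rule eq_matI, insert Kc Lc, auto)
    finally show ?thesis .
  qed
  have p1: "psd (a * b) (N\<^sup>T * L * N)" by (rule psd_congr[OF Lp Nc])
  have p2: "psd (a * b) (kron E Oi0)" by (rule psd_kron[OF E pd_psd[OF Oi0p]])
  have Ekc: "kron E Oi0 \<in> carrier_mat (a * b) (a * b)" using Ec Oi0c kron_carrier[of E Oi0] by auto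
  have "kron E (mat_inv Om0) + kron Om (mat_inv Om0) + kron (mat_inv Om) Om0 - 2 \<cdot>\<^sub>m 1\<^sub>m (a * b)
        = kron E Oi0 + N\<^sup>T * L * N"
    unfolding NLN Oi_def[symmetric] Oi0_def[symmetric] K_def[symmetric] L_def[symmetric]
    by (rule eq_matI, insert Kc Lc Ekc, auto)
  thus ?thesis using psd_add[OF p2 p1] by simp
qed


lemma mult_zero_vec': "(A :: real mat) \<in> carrier_mat n m \<Longrightarrow> A *\<^sub>v 0\<^sub>v m = 0\<^sub>v n"
  by (rule eq_vecI, auto)

lemma add_minus_swap: "(A :: real mat) \<in> carrier_mat n n \<Longrightarrow> B \<in> carrier_mat n n \<Longrightarrow> C \<in> carrier_mat n n
  \<Longrightarrow> A + C - B = (A - B) + C"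
  by (rule eq_matI, auto)

theorem proposition1:
  fixes r p k u :: nat
    and U :: "real mat"      (* r x k, known, full column rank *)
    and alpha :: "real mat"  (* k x p *)
    and S :: "real mat"  (* r x r error covariance *)
    and SX :: "real mat" (* p x p limit of sample covariance of X *)
    and Gamma :: "real mat"  (* r x u *)
    and Gamma0 :: "real mat" (* r x (r - u) *)
  assumes U: "U \<in> carrier_mat r k" "full_col_rank U"
    and alpha: "alpha \<in> carrier_mat k p"
    and S: "pos_def r S"
    and SX: "pos_def p SX"
    and Gamma: "Gamma \<in> carrier_mat r u" "Gamma\<^sup>T * Gamma = 1\<^sub>m u"
    and Gamma_basis: "col_space Gamma = envelope S (col_space (U * alpha))"
    and Gamma0: "Gamma0 \<in> carrier_mat r (r - u)" "Gamma0\<^sup>T * Gamma0 = 1\<^sub>m (r - u)"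
      "Gamma\<^sup>T * Gamma0 = 0\<^sub>m u (r - u)"
    and incl: "col_space (U * alpha) \<subseteq> col_space U"
      "col_space U \<subseteq> envelope S (col_space (U * alpha))"
  shows "loewner_le (p * r) (avar_cm SX S U)
           (avar_em SX S Gamma Gamma0 (U * alpha))"
proof -
  have Uc: "U \<in> carrier_mat r k" using U by simp
  have Uker: "\<And>z. z \<in> carrier_vec k \<Longrightarrow> U *\<^sub>v z = 0\<^sub>v r \<Longrightarrow> z = 0\<^sub>v k"
    using U unfolding full_col_rank_def by auto
  have Sc: "S \<in> carrier_mat r r" using S unfolding pos_def_def by auto
  have Gc: "Gamma \<in> carrier_mat r u" and GG: "Gamma\<^sup>T * Gamma = 1\<^sub>m u" using Gamma by auto
  have G0c: "Gamma0 \<in> carrier_mat r (r - u)" and G0G0: "Gamma0\<^sup>T * Gamma0 = 1\<^sub>m (r - u)" using Gamma0 by auto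
  have UG: "col_space U \<subseteq> col_space Gamma" using incl(2) Gamma_basis by simp
  have PU: "Gamma * Gamma\<^sup>T * U = U"
  proof (rule mat_eq_vec[of _ r k])
    show "Gamma * Gamma\<^sup>T * U \<in> carrier_mat r k" using Gc Uc by auto
    show "U \<in> carrier_mat r k" by (rule Uc)
    fix x :: "real vec" assume x: "x \<in> carrier_vec k"
    have "U *\<^sub>v x \<in> col_space U" unfolding col_space_def using x Uc by auto
    hence "U *\<^sub>v x \<in> col_space Gamma" using UG by auto
    then obtain y where y: "y \<in> carrier_vec u" and Uy: "U *\<^sub>v x = Gamma *\<^sub>v y"
      unfolding col_space_def using Gc by auto
    have "(Gamma * Gamma\<^sup>T * U) *\<^sub>v x = (Gamma * Gamma\<^sup>T) *\<^sub>v (U *\<^sub>v x)"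
      by (rule assoc_mult_mat_vec[of _ r r _ k], insert Gc Uc x, auto)
    also have "\<dots> = Gamma *\<^sub>v (Gamma\<^sup>T *\<^sub>v (U *\<^sub>v x))"
      by (rule assoc_mult_mat_vec[of _ r u _ r], insert Gc Uc x, auto)
    also have "\<dots> = Gamma *\<^sub>v ((Gamma\<^sup>T * Gamma) *\<^sub>v y)" unfolding Uy using Gc y by simp
    also have "\<dots> = U *\<^sub>v x" unfolding GG Uy using y by simp
    finally show "(Gamma * Gamma\<^sup>T * U) *\<^sub>v x = U *\<^sub>v x" .
  qed
  have Dp: "psd r (Gamma * (Gamma\<^sup>T * S * Gamma) * Gamma\<^sup>T - U * mat_inv (U\<^sup>T * mat_inv S * U) * U\<^sup>T)"
    by (rule D_psd[OF S Uc Uker Gc GG PU])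
  have Gker: "z = 0\<^sub>v u" if z: "z \<in> carrier_vec u" and Gz: "Gamma *\<^sub>v z = 0\<^sub>v r" for z
  proof -
    have "z = (Gamma\<^sup>T * Gamma) *\<^sub>v z" unfolding GG using z by simp
    also have "\<dots> = Gamma\<^sup>T *\<^sub>v (Gamma *\<^sub>v z)" using Gc z by simp
    finally show ?thesis unfolding Gz using mult_zero_vec'[of "Gamma\<^sup>T" u r] Gc by simp
  qed
  have G0ker: "z = 0\<^sub>v (r - u)" if z: "z \<in> carrier_vec (r - u)" and Gz: "Gamma0 *\<^sub>v z = 0\<^sub>v r" for z
  proof -
    have "z = (Gamma0\<^sup>T * Gamma0) *\<^sub>v z" unfolding G0G0 using z by simp
    also have "\<dots> = Gamma0\<^sup>T *\<^sub>v (Gamma0 *\<^sub>v z)" using G0c z by simp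
    finally show ?thesis unfolding Gz using mult_zero_vec'[of "Gamma0\<^sup>T" "r - u" r] G0c by simp
  qed
  define Om where "Om = Gamma\<^sup>T * S * Gamma"
  define Om0 where "Om0 = Gamma0\<^sup>T * S * Gamma0"
  have Omp: "pos_def u Om" unfolding Om_def by (rule pd_congr[OF S Gc Gker])
  have Om0p: "pos_def (r - u) Om0" unfolding Om0_def by (rule pd_congr[OF S G0c G0ker])
  have Omc: "Om \<in> carrier_mat u u" and Om0c: "Om0 \<in> carrier_mat (r - u) (r - u)"
    using Omp Om0p unfolding pos_def_def by auto
  define eta where "eta = Gamma\<^sup>T * (U * alpha)"
  have etac: "eta \<in> carrier_mat u p" unfolding eta_def using Gc Uc alpha by auto
  have etaTc: "eta\<^sup>T \<in> carrier_mat p u" using etac by auto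
  have SXc: "SX \<in> carrier_mat p p" using SX unfolding pos_def_def by auto
  have Ep: "psd u (eta * SX * eta\<^sup>T)"
    using psd_congr[OF pd_psd[OF SX] etaTc] by simp
  define M where "M = M_mat eta Om Om0 SX"
  have Mp: "psd (u * (r - u)) M"
  proof -
    have "dim_row Om = u" "dim_row Om0 = r - u" using Omc Om0c by auto
    thus ?thesis unfolding M_def M_mat_def using M_psd[OF Omp Om0p Ep] by simp
  qed
  have MPp: "moore_penrose M \<in> carrier_mat (u * (r - u)) (u * (r - u)) \<and> psd (u * (r - u)) (moore_penrose M)"
    by (rule mp_psd[OF Mp])
  define SXi where "SXi = mat_inv SX"
  have SXip: "pos_def p SXi" unfolding SXi_def by (rule pd_inv_pd[OF SX])
  have SXic: "SXi \<in> carrier_mat p p" using SXip unfolding pos_def_def by auto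
  define B where "B = kron (eta\<^sup>T) Gamma0"
  have Bc: "B \<in> carrier_mat (p * r) (u * (r - u))" unfolding B_def
    using kron_carrier[of "eta\<^sup>T" Gamma0] etaTc G0c by auto
  have BT: "kron eta (Gamma0\<^sup>T) = B\<^sup>T" unfolding B_def kron_transpose by simp
  have BTc: "B\<^sup>T \<in> carrier_mat (u * (r - u)) (p * r)" using Bc by auto
  have t2: "psd (p * r) (B * moore_penrose M * B\<^sup>T)"
    using psd_congr[OF conjunct2[OF MPp] BTc] by simp
  define Dm where "Dm = Gamma * (Gamma\<^sup>T * S * Gamma) * Gamma\<^sup>T - U * mat_inv (U\<^sup>T * mat_inv S * U) * U\<^sup>T"
  have t1: "psd (p * r) (kron SXi Dm)" unfolding Dm_def by (rule psd_kron[OF pd_psd[OF SXip] Dp])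
  define Y where "Y = U * mat_inv (U\<^sup>T * mat_inv S * U) * U\<^sup>T"
  define Z where "Z = Gamma * Om * Gamma\<^sup>T"
  have Yc: "Y \<in> carrier_mat r r" using Dp unfolding Y_def psd_def
    by (metis carrier_matD(1) carrier_matI index_mult_mat(2) index_mult_mat(3) index_transpose_mat(3) Uc)
  have Zc: "Z \<in> carrier_mat r r" unfolding Z_def using Gc Omc by auto
  have cm: "avar_cm SX S U = kron SXi Y" unfolding avar_cm_def SXi_def Y_def ..
  have em: "avar_em SX S Gamma Gamma0 (U * alpha) = kron SXi Z + B * moore_penrose M * B\<^sup>T"
    unfolding avar_em_def Let_def SXi_def[symmetric] Z_def M_def eta_def[symmetric] Om_def[symmetric]
      Om0_def[symmetric] B_def[symmetric] BT ..
  have kY: "kron SXi Y \<in> carrier_mat (p * r) (p * r)" using kron_carrier[of SXi Y] SXic Yc by auto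
  have kZ: "kron SXi Z \<in> carrier_mat (p * r) (p * r)" using kron_carrier[of SXi Z] SXic Zc by auto
  have t2c: "B * moore_penrose M * B\<^sup>T \<in> carrier_mat (p * r) (p * r)" using t2 unfolding psd_def by auto
  have Dm: "Dm = Z - Y" unfolding Dm_def Z_def Y_def Om_def ..
  have kD: "kron SXi Dm = kron SXi Z - kron SXi Y" unfolding Dm by (rule kron_minus_right[OF Zc Yc])
  have diff: "kron SXi Z + B * moore_penrose M * B\<^sup>T - kron SXi Y = kron SXi Dm + B * moore_penrose M * B\<^sup>T"
    unfolding kD by (rule add_minus_swap[OF kZ kY t2c])
  show ?thesis unfolding loewner_le_def cm em diff
    using kY kZ t2c psd_add[OF t1 t2] by auto
qed

end
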